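(* Consider the dynamic panel logit AR(1) model with $T=3$: $(Y_0,X,A)$ has an arbitrary joint distribution with $Y_0\in\{0,1\}$, $X=(X_1,X_2,X_3)\in\mathbb{R}^{K\times 3}$, $A\in\mathbb{R}$, and conditionally on $(Y_0,X,A)$ the outcomes $Y=(Y_1,Y_2,Y_3)\in\{0,1\}^3$ satisfy, for $t\in\{1,2,3\}$, $$\Pr(Y_t=1\mid Y_0,\dots,Y_{t-1},X,A)=\frac{\exp(X_t'\beta_0+Y_{t-1}\gamma_0+A)}{1+\exp(X_t'\beta_0+Y_{t-1}\gamma_0+A)}$$ with true parameters $\beta_0\in\mathbb{R}^K$, $\gamma_0\in\mathbb{R}$. Let $x_{ts}=x_t-x_s$ and define the moment functions $$m_0^{(a)}(y,x,\beta,\gamma)=\begin{cases}\exp(x_{12}'\beta)&y=(0,1,0),\\ \exp(x_{13}'\beta-\gamma)&y=(0,1,1),\\ -1&(y_1,y_2)=(1,0),\\ \exp(x_{32}'\beta)-1&y=(1,1,0),\\0&\text{otherwise},\end{cases}\qquad m_0^{(b)}(y,x,\beta,\gamma)=\begin{cases}\exp(x_{23}'\beta)-1&y=(0,0,1),\\ -1&(y_1,y_2)=(0,1),\\ \exp(x_{31}'\beta)&y=(1,0,0),\\ \exp(\gamma+x_{21}'\beta)&y=(1,0,1),\\0&\text{otherwise},\end{cases}$$ $$m_1^{(a)}(y,x,\beta,\gamma)=\begin{cases}\exp(x_{12}'\beta+\gamma)&y=(0,1,0),\\ \exp(x_{13}'\beta)&y=(0,1,1),\\ -1&(y_1,y_2)=(1,0),\\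 \exp(x_{32}'\beta)-1&y=(1,1,0),\\0&\text{otherwise},\end{cases}\qquad m_1^{(b)}(y,x,\beta,\gamma)=\begin{cases}\exp(x_{23}'\beta)-1&y=(0,0,1),\\ -1&(y_1,y_2)=(0,1),\\ \exp(x_{31}'\beta-\gamma)&y=(1,0,0),\\ \exp(x_{21}'\beta)&y=(1,0,1),\\0&\text{otherwise}.\end{cases}$$ For $k\in\{1,\dots,K\}$ let $\mathcal{X}_{k,+}=\{x\in\mathbb{R}^{K\times3}: x_{k,1}\le x_{k,3}<x_{k,2}\text{ or }x_{k,1}<x_{k,3}\le x_{k,2}\}$ and $\mathcal{X}_{k,-}=\{x\in\mathbb{R}^{K\times3}: x_{k,1}\ge x_{k,3}>x_{k,2}\text{ or }x_{k,1}>x_{k,3}\ge x_{k,2}\}$, where $x_{k,t}$ is the $k$-th component of $x_t$; for $s\in\{-,+\}^K$ let $\mathcal{X}_s=\bigcap_{k=1}^K\mathcal{X}_{k,s_k}$, and let $\overline m^{(\xi)}_{y_0,s}(\beta,\gamma)=\mathbb{E}[m^{(\xi)}_{y_0}(Y,X,\beta,\gamma)\mid Y_0=y_0,X\in\mathcal{X}_s]$. Let $y_0\in\{0,1\}$ and $\xi\in\{a,b\}$, and assume that for all $s\in\{-,+\}^K$, $\Pr(Y_0=y_0,X\in\mathcal{X}_s)>0$ and $\overline m^{(\xi)}_{y_0,s}(\beta,\gamma)$ is well-defined. Then the solution $(\beta,\gamma)\in\mathbb{R}^K\times\mathbb{R}$ of $\overline m^{(\xi)}_{y_0,s}(\beta,\gamma)=0$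 for all $s\in\{-,+\}^K$ is unique and equals $(\beta_0,\gamma_0)$; that is, $\beta_0$ and $\gamma_0$ are point-identified.
   Context: Expectations are taken under the true data distribution (generated with $\beta_0,\gamma_0$), while the moment functions are evaluated at an arbitrary candidate $(\beta,\gamma)$. *)

theory Defs
  imports "HOL-Probability.Probability"
begin

text \<open>Dynamic panel logit AR(1) model with T = 3.
  Covariates x = (x1, x2, x3) with each x_t a vector in R^K, modelled as real^'k
  for an arbitrary finite index type 'k (K = CARD('k)).
  Outcomes y = (y1, y2, y3) in {0,1}^3 are triples of booleans (True = 1);
  the initial condition y0 is a boolean (True = 1).\<close>

type_synonym 'k cov = "(real^'k) \<times> (real^'k) \<times> (real^'k)"
type_synonym outc = "bool \<times> bool \<times> bool"

definition logistic :: "real \<Rightarrow> real" where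
  "logistic z = exp z / (1 + exp z)"

definition bern :: "bool \<Rightarrow> real \<Rightarrow> real" where
  "bern b q = (if b then q else 1 - q)"

definition pY :: "real^'k \<Rightarrow> real \<Rightarrow> bool \<Rightarrow> 'k cov \<Rightarrow> real \<Rightarrow> outc \<Rightarrow> real" where
  "pY beta0 gamma0 y0 x a y =
     (case x of (x1, x2, x3) \<Rightarrow> case y of (y1, y2, y3) \<Rightarrow>
        bern y1 (logistic (x1 \<bullet> beta0 + of_bool y0 * gamma0 + a)) *
        bern y2 (logistic (x2 \<bullet> beta0 + of_bool y1 * gamma0 + a)) *
        bern y3 (logistic (x3 \<bullet> beta0 + of_bool y2 * gamma0 + a)))"

datatype xi = XiA | XiB

definition m0a :: "outc \<Rightarrow> 'k cov \<Rightarrow> real^'k \<Rightarrow> real \<Rightarrow> real" where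
  "m0a y x \<beta> \<gamma> = (case x of (x1, x2, x3) \<Rightarrow>
     if y = (False, True, False) then exp ((x1 - x2) \<bullet> \<beta>)
     else if y = (False, True, True) then exp ((x1 - x3) \<bullet> \<beta> - \<gamma>)
     else if fst y = True \<and> fst (snd y) = False then -1
     else if y = (True, True, False) then exp ((x3 - x2) \<bullet> \<beta>) - 1
     else 0)"

definition m0b :: "outc \<Rightarrow> 'k cov \<Rightarrow> real^'k \<Rightarrow> real \<Rightarrow> real" where
  "m0b y x \<beta> \<gamma> = (case x of (x1, x2, x3) \<Rightarrow>
     if y = (False, False, True) then exp ((x2 - x3) \<bullet> \<beta>) - 1
     else if fst y = False \<and> fst (snd y) = True then -1
     else if y = (True, False, False) then exp ((x3 - x1) \<bullet> \<beta>)
     else if y = (True, False, True) then exp (\<gamma> + (x2 - x1) \<bullet> \<beta>)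
     else 0)"

definition m1a :: "outc \<Rightarrow> 'k cov \<Rightarrow> real^'k \<Rightarrow> real \<Rightarrow> real" where
  "m1a y x \<beta> \<gamma> = (case x of (x1, x2, x3) \<Rightarrow>
     if y = (False, True, False) then exp ((x1 - x2) \<bullet> \<beta> + \<gamma>)
     else if y = (False, True, True) then exp ((x1 - x3) \<bullet> \<beta>)
     else if fst y = True \<and> fst (snd y) = False then -1
     else if y = (True, True, False) then exp ((x3 - x2) \<bullet> \<beta>) - 1
     else 0)"

definition m1b :: "outc \<Rightarrow> 'k cov \<Rightarrow> real^'k \<Rightarrow> real \<Rightarrow> real" where
  "m1b y x \<beta> \<gamma> = (case x of (x1, x2, x3) \<Rightarrow>
     if y = (False, False, True) then exp ((x2 - x3) \<bullet> \<beta>) - 1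
     else if fst y = False \<and> fst (snd y) = True then -1
     else if y = (True, False, False) then exp ((x3 - x1) \<bullet> \<beta> - \<gamma>)
     else if y = (True, False, True) then exp ((x2 - x1) \<bullet> \<beta>)
     else 0)"

definition mom :: "bool \<Rightarrow> xi \<Rightarrow> outc \<Rightarrow> 'k cov \<Rightarrow> real^'k \<Rightarrow> real \<Rightarrow> real" where
  "mom y0 \<xi> = (case (y0, \<xi>) of
      (False, XiA) \<Rightarrow> m0a | (False, XiB) \<Rightarrow> m0b
    | (True, XiA) \<Rightarrow> m1a | (True, XiB) \<Rightarrow> m1b)"

text \<open>Covariate regions X_{k,+}, X_{k,-} and X_s for a sign vector
  s :: 'k => bool (True = +, False = -).\<close>
definition Xplus :: "'k::finite \<Rightarrow> 'k cov set" where
  "Xplus k = {(x1, x2, x3). (x1$k \<le> x3$k \<and> x3$k < x2$k) \<or> (x1$k < x3$k \<and> x3$k \<le> x2$k)}"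

definition Xminus :: "'k::finite \<Rightarrow> 'k cov set" where
  "Xminus k = {(x1, x2, x3). (x1$k \<ge> x3$k \<and> x3$k > x2$k) \<or> (x1$k > x3$k \<and> x3$k \<ge> x2$k)}"

definition Xs :: "('k::finite \<Rightarrow> bool) \<Rightarrow> 'k cov set" where
  "Xs s = (\<Inter>k. if s k then Xplus k else Xminus k)"

definition cond_event :: "bool \<Rightarrow> ('k::finite \<Rightarrow> bool) \<Rightarrow> (bool \<times> 'k cov \<times> real) set" where
  "cond_event y0 s = {(y0', x, a). y0' = y0 \<and> x \<in> Xs s}"

text \<open>mu is the (arbitrary) joint law of (Y0, X, A); the law of Y given (Y0, X, A)
  is given by pY.  The conditional mean E[m(Y,X,beta,gamma) | Y0 = y0, X in X_s]
  under the true data distribution is therefore the following ratio.\<close>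
definition mbar ::
  "(bool \<times> ('k::finite) cov \<times> real) measure \<Rightarrow> real^'k \<Rightarrow> real \<Rightarrow> bool \<Rightarrow> xi \<Rightarrow> ('k \<Rightarrow> bool)
     \<Rightarrow> real^'k \<Rightarrow> real \<Rightarrow> real" where
  "mbar \<mu> beta0 gamma0 y0 \<xi> s \<beta> \<gamma> =
     (\<integral>w. indicator (cond_event y0 s) w *
          (\<Sum>y\<in>UNIV. pY beta0 gamma0 (fst w) (fst (snd w)) (snd (snd w)) y
                        * mom y0 \<xi> y (fst (snd w)) \<beta> \<gamma>) \<partial>\<mu>)
     / measure \<mu> (cond_event y0 s)"

text \<open>Well-definedness of mbar at (beta, gamma): E[|m(Y,X,beta,gamma)| ; Y0 = y0, X in X_s] < oo,
  i.e. each outcome's contribution is integrable.\<close>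
definition mbar_welldef ::
  "(bool \<times> ('k::finite) cov \<times> real) measure \<Rightarrow> real^'k \<Rightarrow> real \<Rightarrow> bool \<Rightarrow> xi \<Rightarrow> ('k \<Rightarrow> bool)
     \<Rightarrow> real^'k \<Rightarrow> real \<Rightarrow> bool" where
  "mbar_welldef \<mu> beta0 gamma0 y0 \<xi> s \<beta> \<gamma> =
     (\<forall>y. integrable \<mu> (\<lambda>w. indicator (cond_event y0 s) w *
          (pY beta0 gamma0 (fst w) (fst (snd w)) (snd (snd w)) y
            * mom y0 \<xi> y (fst (snd w)) \<beta> \<gamma>)))"

end

theory Submission
  imports Defs
begin


lemma sum_outc: "(\<Sum>y\<in>(UNIV::outc set). f y) =
  f (False,False,False) + f (False,False,True) + f (False,True,False) + f (False,True,True) +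
  f (True,False,False) + f (True,False,True) + f (True,True,False) + f (True,True,True)"
proof -
  have eq: "(UNIV::outc set) = {(False,False,False), (False,False,True), (False,True,False), (False,True,True),
     (True,False,False), (True,False,True), (True,True,False), (True,True,True)}" by auto
  show ?thesis by (simp add: eq add.assoc)
qed

lemma onem: "1 - E/(1+E) = 1/(1+E)" if "E > 0" for E :: real using that by (simp add: field_simps)

lemma alg_0a:
  fixes E1 E2 E3 G X1 X2 X3 :: real
  assumes "E1 > 0" "E2 > 0" "E3 > 0" "G > 0"
  shows "(1 - E1/(1+E1)) * (E2/(1+E2)) * (1 - E3*G/(1+E3*G)) * (X1*E1/E2)
    + (1 - E1/(1+E1)) * (E2/(1+E2)) * (E3*G/(1+E3*G)) * (X2*E1/(E3*G))
    - (E1/(1+E1)) * (1 - E2*G/(1+E2*G)) * (1 - E3/(1+E3))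
    - (E1/(1+E1)) * (1 - E2*G/(1+E2*G)) * (E3/(1+E3))
    + (E1/(1+E1)) * (E2*G/(1+E2*G)) * (1 - E3*G/(1+E3*G)) * (X3*E3/E2 - 1)
   = E1/((1+E1)*(1+E2)*(1+E2*G)*(1+E3*G)) *
     ((1+E2*G)*(X1-1) + (1+E2*G)*E2*(X2-1) + (1+E2)*E3*G*(X3-1))"
proof -
  have q: "E2*G>0" "E3*G>0" using assms by auto
  have p: "1+E1 > 0" "1+E2 > 0" "1+E3>0" "1+E2*G > 0" "1+E3*G > 0" "E2*G>0" "E3*G>0" using assms q by linarith+
  show ?thesis
    unfolding onem[OF assms(1)] onem[OF assms(3)] onem[OF p(6)] onem[OF p(7)]
    using assms p
    apply (simp add: divide_simps p[THEN less_imp_neq, symmetric])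
    apply (simp add: algebra_simps)
    done
qed

lemma alg_1a:
  fixes E1 E2 E3 G X1 X2 X3 :: real
  assumes "E1 > 0" "E2 > 0" "E3 > 0" "G > 0"
  shows "(1 - E1*G/(1+E1*G)) * (E2/(1+E2)) * (1 - E3*G/(1+E3*G)) * (X1*E1*G/E2)
    + (1 - E1*G/(1+E1*G)) * (E2/(1+E2)) * (E3*G/(1+E3*G)) * (X2*E1/E3)
    - (E1*G/(1+E1*G)) * (1 - E2*G/(1+E2*G)) * (1 - E3/(1+E3))
    - (E1*G/(1+E1*G)) * (1 - E2*G/(1+E2*G)) * (E3/(1+E3))
    + (E1*G/(1+E1*G)) * (E2*G/(1+E2*G)) * (1 - E3*G/(1+E3*G)) * (X3*E3/E2 - 1)
   = E1*G/((1+E1*G)*(1+E2)*(1+E2*G)*(1+E3*G)) *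
     ((1+E2*G)*(X1-1) + (1+E2*G)*E2*(X2-1) + (1+E2)*E3*G*(X3-1))"
proof -
  have q: "E2*G>0" "E3*G>0" "E1*G>0" using assms by auto
  have p: "1+E1*G > 0" "1+E2 > 0" "1+E3>0" "1+E2*G > 0" "1+E3*G > 0" using assms q by linarith+
  show ?thesis
    unfolding onem[OF q(3)] onem[OF assms(3)] onem[OF q(1)] onem[OF q(2)]
    using assms p q
    apply (simp add: divide_simps p[THEN less_imp_neq, symmetric])
    apply (simp add: algebra_simps)
    done
qed

lemma alg_0b:
  fixes E1 E2 E3 G X1 X2 X3 :: real
  assumes "E1 > 0" "E2 > 0" "E3 > 0" "G > 0"
  shows "(1 - E1/(1+E1)) * (1 - E2/(1+E2)) * (E3/(1+E3)) * (X1*E2/E3 - 1)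
    - (1 - E1/(1+E1)) * (E2/(1+E2)) * (1 - E3*G/(1+E3*G))
    - (1 - E1/(1+E1)) * (E2/(1+E2)) * (E3*G/(1+E3*G))
    + (E1/(1+E1)) * (1 - E2*G/(1+E2*G)) * (1 - E3/(1+E3)) * (X2*E3/E1)
    + (E1/(1+E1)) * (1 - E2*G/(1+E2*G)) * (E3/(1+E3)) * (X3*G*E2/E1)
   = 1/((1+E1)*(1+E2)*(1+E2*G)*(1+E3)) *
     ((1+E2*G)*E2*(X1-1) + (1+E2)*E3*(X2-1) + (1+E2)*E3*G*E2*(X3-1))"
proof -
  have q: "E2*G>0" "E3*G>0" using assms by auto
  have p: "1+E1 > 0" "1+E2 > 0" "1+E3>0" "1+E2*G > 0" "1+E3*G > 0" using assms q by linarith+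
  show ?thesis
    unfolding onem[OF assms(1)] onem[OF assms(2)] onem[OF assms(3)] onem[OF q(1)] onem[OF q(2)]
    using assms p q
    apply (simp add: divide_simps p[THEN less_imp_neq, symmetric])
    apply (simp add: algebra_simps)
    done
qed

lemma alg_1b:
  fixes E1 E2 E3 G X1 X2 X3 :: real
  assumes "E1 > 0" "E2 > 0" "E3 > 0" "G > 0"
  shows "(1 - E1*G/(1+E1*G)) * (1 - E2/(1+E2)) * (E3/(1+E3)) * (X1*E2/E3 - 1)
    - (1 - E1*G/(1+E1*G)) * (E2/(1+E2)) * (1 - E3*G/(1+E3*G))
    - (1 - E1*G/(1+E1*G)) * (E2/(1+E2)) * (E3*G/(1+E3*G))
    + (E1*G/(1+E1*G)) * (1 - E2*G/(1+E2*G)) * (1 - E3/(1+E3)) * (X2*E3/(E1*G))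
    + (E1*G/(1+E1*G)) * (1 - E2*G/(1+E2*G)) * (E3/(1+E3)) * (X3*E2/E1)
   = 1/((1+E1*G)*(1+E2)*(1+E2*G)*(1+E3)) *
     ((1+E2*G)*E2*(X1-1) + (1+E2)*E3*(X2-1) + (1+E2)*E3*G*E2*(X3-1))"
proof -
  have q: "E2*G>0" "E3*G>0" "E1*G>0" using assms by auto
  have p: "1+E1*G > 0" "1+E2 > 0" "1+E3>0" "1+E2*G > 0" "1+E3*G > 0" using assms q by linarith+
  show ?thesis
    unfolding onem[OF q(3)] onem[OF assms(2)] onem[OF assms(3)] onem[OF q(1)] onem[OF q(2)]
    using assms p q
    apply (simp add: divide_simps p[THEN less_imp_neq, symmetric])
    apply (simp add: algebra_simps)
    done
qed




lemma rep_0a: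
  fixes x1 x2 x3 \<beta> beta0 :: "real^'k" and a \<gamma> gamma0 :: real
  defines "a1 \<equiv> (x1-x3)\<bullet>(\<beta>-beta0)" and "a2 \<equiv> (x3-x2)\<bullet>(\<beta>-beta0)" and "d \<equiv> \<gamma> - gamma0"
  shows "\<exists>K c1 c2 c3. K>0 \<and> c1>0 \<and> c2>0 \<and> c3>0 \<and>
    (\<Sum>y\<in>UNIV. pY beta0 gamma0 False (x1,x2,x3) a y * m0a y (x1,x2,x3) \<beta> \<gamma>)
     = K*(c1*(exp(a1+a2)-1) + c2*(exp(a1-d)-1) + c3*(exp(a2) - 1))"
proof -
  define E1 where "E1 = exp (x1\<bullet>beta0 + a)"
  define E2 where "E2 = exp (x2\<bullet>beta0 + a)"
  define E3 where "E3 = exp (x3\<bullet>beta0 + a)"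
  define G where "G = exp gamma0"
  have pos: "E1 > 0" "E2 > 0" "E3 > 0" "G > 0" by (simp_all add: E1_def E2_def E3_def G_def)
  have eG: "exp (x2\<bullet>beta0 + gamma0 + a) = E2*G" "exp (x3\<bullet>beta0 + gamma0 + a) = E3*G"
    "exp (x1\<bullet>beta0 + gamma0 + a) = E1*G"
    by (simp_all add: E1_def E2_def E3_def G_def exp_add[symmetric] add_ac)
  have L: "logistic (x1\<bullet>beta0 + a) = E1/(1+E1)" "logistic (x2\<bullet>beta0 + a) = E2/(1+E2)"
    "logistic (x3\<bullet>beta0 + a) = E3/(1+E3)"
    "logistic (x1\<bullet>beta0 + gamma0 + a) = E1*G/(1+E1*G)"
    "logistic (x2\<bullet>beta0 + gamma0 + a) = E2*G/(1+E2*G)"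
    "logistic (x3\<bullet>beta0 + gamma0 + a) = E3*G/(1+E3*G)"
    unfolding logistic_def eG by (simp_all add: E1_def E2_def E3_def)
  have M1: "exp ((x1-x2)\<bullet>\<beta>) = exp(a1+a2)*E1/E2"
  proof -
    have "exp ((x1-x2)\<bullet>\<beta>) = exp ((a1+a2) + (x1\<bullet>beta0 + a) - (x2\<bullet>beta0 + a))"
      by (rule arg_cong[where f=exp]) (simp add: a1_def a2_def d_def inner_diff_left inner_diff_right)
    then show ?thesis by (simp add: exp_add exp_diff exp_minus field_simps E1_def E2_def E3_def G_def)
  qed
  have M2: "exp ((x1-x3)\<bullet>\<beta> - \<gamma>) = exp(a1-d)*E1/(E3*G)"
  proof -
    have "exp ((x1-x3)\<bullet>\<beta> - \<gamma>) = exp ((a1-d) + (x1\<bullet>beta0 + a) - ((x3\<bullet>beta0 + a) + gamma0))"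
      by (rule arg_cong[where f=exp]) (simp add: a1_def a2_def d_def inner_diff_left inner_diff_right)
    then show ?thesis by (simp add: exp_add exp_diff exp_minus field_simps E1_def E2_def E3_def G_def)
  qed
  have M3: "exp ((x3-x2)\<bullet>\<beta>) = exp(a2)*E3/E2"
  proof -
    have "exp ((x3-x2)\<bullet>\<beta>) = exp ((a2) + (x3\<bullet>beta0 + a) - (x2\<bullet>beta0 + a))"
      by (rule arg_cong[where f=exp]) (simp add: a1_def a2_def d_def inner_diff_left inner_diff_right)
    then show ?thesis by (simp add: exp_add exp_diff exp_minus field_simps E1_def E2_def E3_def G_def)
  qed
  have "(\<Sum>y\<in>UNIV. pY beta0 gamma0 False (x1,x2,x3) a y * m0a y (x1,x2,x3) \<beta> \<gamma>)
     = E1/((1+E1)*(1+E2)*(1+E2*G)*(1+E3*G)) *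
     ((1+E2*G)*(exp(a1+a2)-1) + (1+E2*G)*E2*(exp(a1-d)-1) + (1+E2)*E3*G*(exp(a2)-1))"
    apply (simp add: sum_outc pY_def m0a_def bern_def)
    apply (simp only: L M1 M2 M3)
    apply (subst alg_0a[OF pos])
    by simp
  moreover have "E1/((1+E1)*(1+E2)*(1+E2*G)*(1+E3*G)) > 0" "(1+E2*G) > 0" "(1+E2*G)*E2 > 0" "(1+E2)*E3*G > 0"
    using pos by (simp_all add: add_pos_pos)
  ultimately show ?thesis by blast
qed

lemma rep_1a:
  fixes x1 x2 x3 \<beta> beta0 :: "real^'k" and a \<gamma> gamma0 :: real
  defines "a1 \<equiv> (x1-x3)\<bullet>(\<beta>-beta0)" and "a2 \<equiv> (x3-x2)\<bullet>(\<beta>-beta0)" and "d \<equiv> \<gamma> - gamma0"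
  shows "\<exists>K c1 c2 c3. K>0 \<and> c1>0 \<and> c2>0 \<and> c3>0 \<and>
    (\<Sum>y\<in>UNIV. pY beta0 gamma0 True (x1,x2,x3) a y * m1a y (x1,x2,x3) \<beta> \<gamma>)
     = K*(c1*(exp(a1+a2+d)-1) + c2*(exp(a1)-1) + c3*(exp(a2) - 1))"
proof -
  define E1 where "E1 = exp (x1\<bullet>beta0 + a)"
  define E2 where "E2 = exp (x2\<bullet>beta0 + a)"
  define E3 where "E3 = exp (x3\<bullet>beta0 + a)"
  define G where "G = exp gamma0"
  have pos: "E1 > 0" "E2 > 0" "E3 > 0" "G > 0" by (simp_all add: E1_def E2_def E3_def G_def)
  have eG: "exp (x2\<bullet>beta0 + gamma0 + a) = E2*G" "exp (x3\<bullet>beta0 + gamma0 + a) = E3*G"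
    "exp (x1\<bullet>beta0 + gamma0 + a) = E1*G"
    by (simp_all add: E1_def E2_def E3_def G_def exp_add[symmetric] add_ac)
  have L: "logistic (x1\<bullet>beta0 + a) = E1/(1+E1)" "logistic (x2\<bullet>beta0 + a) = E2/(1+E2)"
    "logistic (x3\<bullet>beta0 + a) = E3/(1+E3)"
    "logistic (x1\<bullet>beta0 + gamma0 + a) = E1*G/(1+E1*G)"
    "logistic (x2\<bullet>beta0 + gamma0 + a) = E2*G/(1+E2*G)"
    "logistic (x3\<bullet>beta0 + gamma0 + a) = E3*G/(1+E3*G)"
    unfolding logistic_def eG by (simp_all add: E1_def E2_def E3_def)
  have M1: "exp ((x1-x2)\<bullet>\<beta> + \<gamma>) = exp(a1+a2+d)*E1*G/E2"
  proof -
    have "exp ((x1-x2)\<bullet>\<beta> + \<gamma>) = exp ((a1+a2+d) + (x1\<bullet>beta0 + a) + gamma0 - (x2\<bullet>beta0 + a))"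
      by (rule arg_cong[where f=exp]) (simp add: a1_def a2_def d_def inner_diff_left inner_diff_right)
    then show ?thesis by (simp add: exp_add exp_diff exp_minus field_simps E1_def E2_def E3_def G_def)
  qed
  have M2: "exp ((x1-x3)\<bullet>\<beta>) = exp(a1)*E1/E3"
  proof -
    have "exp ((x1-x3)\<bullet>\<beta>) = exp ((a1) + (x1\<bullet>beta0 + a) - (x3\<bullet>beta0 + a))"
      by (rule arg_cong[where f=exp]) (simp add: a1_def a2_def d_def inner_diff_left inner_diff_right)
    then show ?thesis by (simp add: exp_add exp_diff exp_minus field_simps E1_def E2_def E3_def G_def)
  qed
  have M3: "exp ((x3-x2)\<bullet>\<beta>) = exp(a2)*E3/E2"
  proof -
    have "exp ((x3-x2)\<bullet>\<beta>) = exp ((a2) + (x3\<bullet>beta0 + a) - (x2\<bullet>beta0 + a))"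
      by (rule arg_cong[where f=exp]) (simp add: a1_def a2_def d_def inner_diff_left inner_diff_right)
    then show ?thesis by (simp add: exp_add exp_diff exp_minus field_simps E1_def E2_def E3_def G_def)
  qed
  have "(\<Sum>y\<in>UNIV. pY beta0 gamma0 True (x1,x2,x3) a y * m1a y (x1,x2,x3) \<beta> \<gamma>)
     = E1*G/((1+E1*G)*(1+E2)*(1+E2*G)*(1+E3*G)) *
     ((1+E2*G)*(exp(a1+a2+d)-1) + (1+E2*G)*E2*(exp(a1)-1) + (1+E2)*E3*G*(exp(a2)-1))"
    apply (simp add: sum_outc pY_def m1a_def bern_def)
    apply (simp only: L M1 M2 M3)
    apply (subst alg_1a[OF pos])
    by simp
  moreover have "E1*G/((1+E1*G)*(1+E2)*(1+E2*G)*(1+E3*G)) > 0" "(1+E2*G) > 0" "(1+E2*G)*E2 > 0" "(1+E2)*E3*G > 0"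
    using pos by (simp_all add: add_pos_pos)
  ultimately show ?thesis by blast
qed

lemma rep_0b:
  fixes x1 x2 x3 \<beta> beta0 :: "real^'k" and a \<gamma> gamma0 :: real
  defines "a1 \<equiv> (x1-x3)\<bullet>(\<beta>-beta0)" and "a2 \<equiv> (x3-x2)\<bullet>(\<beta>-beta0)" and "d \<equiv> \<gamma> - gamma0"
  shows "\<exists>K c1 c2 c3. K>0 \<and> c1>0 \<and> c2>0 \<and> c3>0 \<and>
    (\<Sum>y\<in>UNIV. pY beta0 gamma0 False (x1,x2,x3) a y * m0b y (x1,x2,x3) \<beta> \<gamma>)
     = K*(c1*(exp(-a2)-1) + c2*(exp(-a1)-1) + c3*(exp(d-a1-a2) - 1))"
proof -
  define E1 where "E1 = exp (x1\<bullet>beta0 + a)"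
  define E2 where "E2 = exp (x2\<bullet>beta0 + a)"
  define E3 where "E3 = exp (x3\<bullet>beta0 + a)"
  define G where "G = exp gamma0"
  have pos: "E1 > 0" "E2 > 0" "E3 > 0" "G > 0" by (simp_all add: E1_def E2_def E3_def G_def)
  have eG: "exp (x2\<bullet>beta0 + gamma0 + a) = E2*G" "exp (x3\<bullet>beta0 + gamma0 + a) = E3*G"
    "exp (x1\<bullet>beta0 + gamma0 + a) = E1*G"
    by (simp_all add: E1_def E2_def E3_def G_def exp_add[symmetric] add_ac)
  have L: "logistic (x1\<bullet>beta0 + a) = E1/(1+E1)" "logistic (x2\<bullet>beta0 + a) = E2/(1+E2)"
    "logistic (x3\<bullet>beta0 + a) = E3/(1+E3)"
    "logistic (x1\<bullet>beta0 + gamma0 + a) = E1*G/(1+E1*G)"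
    "logistic (x2\<bullet>beta0 + gamma0 + a) = E2*G/(1+E2*G)"
    "logistic (x3\<bullet>beta0 + gamma0 + a) = E3*G/(1+E3*G)"
    unfolding logistic_def eG by (simp_all add: E1_def E2_def E3_def)
  have M1: "exp ((x2-x3)\<bullet>\<beta>) = exp(-a2)*E2/E3"
  proof -
    have "exp ((x2-x3)\<bullet>\<beta>) = exp ((-a2) + (x2\<bullet>beta0 + a) - (x3\<bullet>beta0 + a))"
      by (rule arg_cong[where f=exp]) (simp add: a1_def a2_def d_def inner_diff_left inner_diff_right)
    then show ?thesis by (simp add: exp_add exp_diff exp_minus field_simps E1_def E2_def E3_def G_def)
  qed
  have M2: "exp ((x3-x1)\<bullet>\<beta>) = exp(-a1)*E3/E1"
  proof -
    have "exp ((x3-x1)\<bullet>\<beta>) = exp ((-a1) + (x3\<bullet>beta0 + a) - (x1\<bullet>beta0 + a))"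
      by (rule arg_cong[where f=exp]) (simp add: a1_def a2_def d_def inner_diff_left inner_diff_right)
    then show ?thesis by (simp add: exp_add exp_diff exp_minus field_simps E1_def E2_def E3_def G_def)
  qed
  have M3: "exp (\<gamma> + (x2-x1)\<bullet>\<beta>) = exp(d-a1-a2)*G*E2/E1"
  proof -
    have "exp (\<gamma> + (x2-x1)\<bullet>\<beta>) = exp ((d-a1-a2) + gamma0 + (x2\<bullet>beta0 + a) - (x1\<bullet>beta0 + a))"
      by (rule arg_cong[where f=exp]) (simp add: a1_def a2_def d_def inner_diff_left inner_diff_right)
    then show ?thesis by (simp add: exp_add exp_diff exp_minus field_simps E1_def E2_def E3_def G_def)
  qed
  have "(\<Sum>y\<in>UNIV. pY beta0 gamma0 False (x1,x2,x3) a y * m0b y (x1,x2,x3) \<beta> \<gamma>)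
     = 1/((1+E1)*(1+E2)*(1+E2*G)*(1+E3)) *
     ((1+E2*G)*E2*(exp(-a2)-1) + (1+E2)*E3*(exp(-a1)-1) + (1+E2)*E3*G*E2*(exp(d-a1-a2)-1))"
    apply (simp add: sum_outc pY_def m0b_def bern_def)
    apply (simp only: L M1 M2 M3)
    apply (subst alg_0b[OF pos])
    by simp
  moreover have "1/((1+E1)*(1+E2)*(1+E2*G)*(1+E3)) > 0" "(1+E2*G)*E2 > 0" "(1+E2)*E3 > 0" "(1+E2)*E3*G*E2 > 0"
    using pos by (simp_all add: add_pos_pos)
  ultimately show ?thesis by blast
qed

lemma rep_1b:
  fixes x1 x2 x3 \<beta> beta0 :: "real^'k" and a \<gamma> gamma0 :: real
  defines "a1 \<equiv> (x1-x3)\<bullet>(\<beta>-beta0)" and "a2 \<equiv> (x3-x2)\<bullet>(\<beta>-beta0)" and "d \<equiv> \<gamma> - gamma0"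
  shows "\<exists>K c1 c2 c3. K>0 \<and> c1>0 \<and> c2>0 \<and> c3>0 \<and>
    (\<Sum>y\<in>UNIV. pY beta0 gamma0 True (x1,x2,x3) a y * m1b y (x1,x2,x3) \<beta> \<gamma>)
     = K*(c1*(exp(-a2)-1) + c2*(exp(-a1-d)-1) + c3*(exp(-a1-a2) - 1))"
proof -
  define E1 where "E1 = exp (x1\<bullet>beta0 + a)"
  define E2 where "E2 = exp (x2\<bullet>beta0 + a)"
  define E3 where "E3 = exp (x3\<bullet>beta0 + a)"
  define G where "G = exp gamma0"
  have pos: "E1 > 0" "E2 > 0" "E3 > 0" "G > 0" by (simp_all add: E1_def E2_def E3_def G_def)
  have eG: "exp (x2\<bullet>beta0 + gamma0 + a) = E2*G" "exp (x3\<bullet>beta0 + gamma0 + a) = E3*G"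
    "exp (x1\<bullet>beta0 + gamma0 + a) = E1*G"
    by (simp_all add: E1_def E2_def E3_def G_def exp_add[symmetric] add_ac)
  have L: "logistic (x1\<bullet>beta0 + a) = E1/(1+E1)" "logistic (x2\<bullet>beta0 + a) = E2/(1+E2)"
    "logistic (x3\<bullet>beta0 + a) = E3/(1+E3)"
    "logistic (x1\<bullet>beta0 + gamma0 + a) = E1*G/(1+E1*G)"
    "logistic (x2\<bullet>beta0 + gamma0 + a) = E2*G/(1+E2*G)"
    "logistic (x3\<bullet>beta0 + gamma0 + a) = E3*G/(1+E3*G)"
    unfolding logistic_def eG by (simp_all add: E1_def E2_def E3_def)
  have M1: "exp ((x2-x3)\<bullet>\<beta>) = exp(-a2)*E2/E3"
  proof -
    have "exp ((x2-x3)\<bullet>\<beta>) = exp ((-a2) + (x2\<bullet>beta0 + a) - (x3\<bullet>beta0 + a))"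
      by (rule arg_cong[where f=exp]) (simp add: a1_def a2_def d_def inner_diff_left inner_diff_right)
    then show ?thesis by (simp add: exp_add exp_diff exp_minus field_simps E1_def E2_def E3_def G_def)
  qed
  have M2: "exp ((x3-x1)\<bullet>\<beta> - \<gamma>) = exp(-a1-d)*E3/(E1*G)"
  proof -
    have "exp ((x3-x1)\<bullet>\<beta> - \<gamma>) = exp ((-a1-d) + (x3\<bullet>beta0 + a) - ((x1\<bullet>beta0 + a) + gamma0))"
      by (rule arg_cong[where f=exp]) (simp add: a1_def a2_def d_def inner_diff_left inner_diff_right)
    then show ?thesis by (simp add: exp_add exp_diff exp_minus field_simps E1_def E2_def E3_def G_def)
  qed
  have M3: "exp ((x2-x1)\<bullet>\<beta>) = exp(-a1-a2)*E2/E1"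
  proof -
    have "exp ((x2-x1)\<bullet>\<beta>) = exp ((-a1-a2) + (x2\<bullet>beta0 + a) - (x1\<bullet>beta0 + a))"
      by (rule arg_cong[where f=exp]) (simp add: a1_def a2_def d_def inner_diff_left inner_diff_right)
    then show ?thesis by (simp add: exp_add exp_diff exp_minus field_simps E1_def E2_def E3_def G_def)
  qed
  have "(\<Sum>y\<in>UNIV. pY beta0 gamma0 True (x1,x2,x3) a y * m1b y (x1,x2,x3) \<beta> \<gamma>)
     = 1/((1+E1*G)*(1+E2)*(1+E2*G)*(1+E3)) *
     ((1+E2*G)*E2*(exp(-a2)-1) + (1+E2)*E3*(exp(-a1-d)-1) + (1+E2)*E3*G*E2*(exp(-a1-a2)-1))"
    apply (simp add: sum_outc pY_def m1b_def bern_def)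
    apply (simp only: L M1 M2 M3)
    apply (subst alg_1b[OF pos])
    by simp
  moreover have "1/((1+E1*G)*(1+E2)*(1+E2*G)*(1+E3)) > 0" "(1+E2*G)*E2 > 0" "(1+E2)*E3 > 0" "(1+E2)*E3*G*E2 > 0"
    using pos by (simp_all add: add_pos_pos)
  ultimately show ?thesis by blast
qed




definition Sfun :: "real^'k \<Rightarrow> real \<Rightarrow> bool \<Rightarrow> xi \<Rightarrow> 'k cov \<Rightarrow> real \<Rightarrow> real^'k \<Rightarrow> real \<Rightarrow> real" where
  "Sfun beta0 gamma0 y0 \<xi> x a \<beta> \<gamma> = (\<Sum>y\<in>UNIV. pY beta0 gamma0 y0 x a y * mom y0 \<xi> y x \<beta> \<gamma>)"

definition tv :: "bool \<Rightarrow> xi \<Rightarrow> real \<Rightarrow> real \<Rightarrow> real \<Rightarrow> real \<times> real \<times> real" where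
  "tv y0 \<xi> a1 a2 d = (case (y0, \<xi>) of
     (False, XiA) \<Rightarrow> (a1+a2, a1-d, a2)
   | (True, XiA) \<Rightarrow> (a1+a2+d, a1, a2)
   | (False, XiB) \<Rightarrow> (-a2, -a1, d-a1-a2)
   | (True, XiB) \<Rightarrow> (-a2, -a1-d, -a1-a2))"

lemma rep_all:
  fixes x1 x2 x3 \<beta> beta0 :: "real^'k" and a \<gamma> gamma0 :: real
  shows "\<exists>K c1 c2 c3 t1 t2 t3. K>0 \<and> c1>0 \<and> c2>0 \<and> c3>0 \<and>
    tv y0 \<xi> ((x1-x3)\<bullet>(\<beta>-beta0)) ((x3-x2)\<bullet>(\<beta>-beta0)) (\<gamma> - gamma0) = (t1,t2,t3) \<and>
    Sfun beta0 gamma0 y0 \<xi> (x1,x2,x3) a \<beta> \<gamma>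
     = K*(c1*(exp t1-1) + c2*(exp t2-1) + c3*(exp t3 - 1))"
proof (cases y0; cases \<xi>)
  assume "\<not> y0" "\<xi> = XiA" then show ?thesis
    using rep_0a[where ?x1.0=x1 and ?x2.0=x2 and ?x3.0=x3 and ?\<beta>=\<beta> and ?beta0.0=beta0 and ?\<gamma>=\<gamma> and ?gamma0.0=gamma0 and ?a=a] by (simp add: Sfun_def mom_def tv_def)
next
  assume "\<not> y0" "\<xi> = XiB" then show ?thesis
    using rep_0b[where ?x1.0=x1 and ?x2.0=x2 and ?x3.0=x3 and ?\<beta>=\<beta> and ?beta0.0=beta0 and ?\<gamma>=\<gamma> and ?gamma0.0=gamma0 and ?a=a] by (simp add: Sfun_def mom_def tv_def)
next
  assume "y0" "\<xi> = XiA" then show ?thesis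
    using rep_1a[where ?x1.0=x1 and ?x2.0=x2 and ?x3.0=x3 and ?\<beta>=\<beta> and ?beta0.0=beta0 and ?\<gamma>=\<gamma> and ?gamma0.0=gamma0 and ?a=a] by (simp add: Sfun_def mom_def tv_def)
next
  assume "y0" "\<xi> = XiB" then show ?thesis
    using rep_1b[where ?x1.0=x1 and ?x2.0=x2 and ?x3.0=x3 and ?\<beta>=\<beta> and ?beta0.0=beta0 and ?\<gamma>=\<gamma> and ?gamma0.0=gamma0 and ?a=a] by (simp add: Sfun_def mom_def tv_def)
qed

lemma hneg: "c > 0 \<Longrightarrow> t \<le> 0 \<Longrightarrow> c*(exp t - 1) \<le> (0::real)"
  by (simp add: mult_nonneg_nonpos)
lemma hneg': "c > 0 \<Longrightarrow> t < 0 \<Longrightarrow> c*(exp t - 1) < (0::real)"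
  by (simp add: mult_pos_neg)
lemma hpos: "c > 0 \<Longrightarrow> t \<ge> 0 \<Longrightarrow> c*(exp t - 1) \<ge> (0::real)"
  by simp
lemma hpos': "c > 0 \<Longrightarrow> t > 0 \<Longrightarrow> c*(exp t - 1) > (0::real)"
  by simp

lemma neg3:
  fixes K c1 c2 c3 t1 t2 t3 :: real
  assumes "K>0" "c1>0" "c2>0" "c3>0" "t1\<le>0" "t2\<le>0" "t3\<le>0" "t1<0 \<or> t2<0 \<or> t3<0"
  shows "K*(c1*(exp t1-1) + c2*(exp t2-1) + c3*(exp t3 - 1)) < 0"
proof -
  have "c1*(exp t1-1) + c2*(exp t2-1) + c3*(exp t3 - 1) < 0"
    using hneg[of c1 t1] hneg[of c2 t2] hneg[of c3 t3] hneg'[of c1 t1] hneg'[of c2 t2] hneg'[of c3 t3] assms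
    by linarith
  then show ?thesis using assms(1) by (simp add: mult_pos_neg)
qed

lemma pos3:
  fixes K c1 c2 c3 t1 t2 t3 :: real
  assumes "K>0" "c1>0" "c2>0" "c3>0" "t1\<ge>0" "t2\<ge>0" "t3\<ge>0" "t1>0 \<or> t2>0 \<or> t3>0"
  shows "K*(c1*(exp t1-1) + c2*(exp t2-1) + c3*(exp t3 - 1)) > 0"
proof -
  have "c1*(exp t1-1) + c2*(exp t2-1) + c3*(exp t3 - 1) > 0"
    using hpos[of c1 t1] hpos[of c2 t2] hpos[of c3 t3] hpos'[of c1 t1] hpos'[of c2 t2] hpos'[of c3 t3] assms
    by linarith
  then show ?thesis using assms(1) by simp
qed

definition allneg :: "real \<times> real \<times> real \<Rightarrow> bool" where
  "allneg t = (case t of (t1,t2,t3) \<Rightarrow> t1\<le>0 \<and> t2\<le>0 \<and> t3\<le>0 \<and> (t1<0 \<or> t2<0 \<or> t3<0))"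
definition allpos :: "real \<times> real \<times> real \<Rightarrow> bool" where
  "allpos t = (case t of (t1,t2,t3) \<Rightarrow> t1\<ge>0 \<and> t2\<ge>0 \<and> t3\<ge>0 \<and> (t1>0 \<or> t2>0 \<or> t3>0))"

lemma Sfun_neg:
  assumes "allneg (tv y0 \<xi> ((x1-x3)\<bullet>(\<beta>-beta0)) ((x3-x2)\<bullet>(\<beta>-beta0)) (\<gamma> - gamma0))"
  shows "Sfun beta0 gamma0 y0 \<xi> (x1,x2,x3) a \<beta> \<gamma> < 0"
proof -
  obtain K c1 c2 c3 t1 t2 t3 where H: "K>0" "c1>0" "c2>0" "c3>0"
    "tv y0 \<xi> ((x1-x3)\<bullet>(\<beta>-beta0)) ((x3-x2)\<bullet>(\<beta>-beta0)) (\<gamma> - gamma0) = (t1,t2,t3)"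
    "Sfun beta0 gamma0 y0 \<xi> (x1,x2,x3) a \<beta> \<gamma> = K*(c1*(exp t1-1) + c2*(exp t2-1) + c3*(exp t3 - 1))"
    using rep_all[where ?y0.0=y0 and ?\<xi>=\<xi> and ?x1.0=x1 and ?x2.0=x2 and ?x3.0=x3 and ?a=a and ?beta0.0=beta0 and ?gamma0.0=gamma0] by blast
  show ?thesis using assms H neg3[of K c1 c2 c3 t1 t2 t3] by (simp add: allneg_def)
qed

lemma Sfun_pos:
  assumes "allpos (tv y0 \<xi> ((x1-x3)\<bullet>(\<beta>-beta0)) ((x3-x2)\<bullet>(\<beta>-beta0)) (\<gamma> - gamma0))"
  shows "Sfun beta0 gamma0 y0 \<xi> (x1,x2,x3) a \<beta> \<gamma> > 0"
proof -
  obtain K c1 c2 c3 t1 t2 t3 where H: "K>0" "c1>0" "c2>0" "c3>0"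
    "tv y0 \<xi> ((x1-x3)\<bullet>(\<beta>-beta0)) ((x3-x2)\<bullet>(\<beta>-beta0)) (\<gamma> - gamma0) = (t1,t2,t3)"
    "Sfun beta0 gamma0 y0 \<xi> (x1,x2,x3) a \<beta> \<gamma> = K*(c1*(exp t1-1) + c2*(exp t2-1) + c3*(exp t3 - 1))"
    using rep_all[where ?y0.0=y0 and ?\<xi>=\<xi> and ?x1.0=x1 and ?x2.0=x2 and ?x3.0=x3 and ?a=a and ?beta0.0=beta0 and ?gamma0.0=gamma0] by blast
  show ?thesis using assms H pos3[of K c1 c2 c3 t1 t2 t3] by (simp add: allpos_def)
qed

lemma Sfun_zero: "Sfun beta0 gamma0 y0 \<xi> (x1,x2,x3) a beta0 gamma0 = 0"
proof -
  obtain K c1 c2 c3 t1 t2 t3 where H: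
    "tv y0 \<xi> ((x1-x3)\<bullet>(beta0-beta0)) ((x3-x2)\<bullet>(beta0-beta0)) (gamma0 - gamma0) = (t1,t2,t3)"
    "Sfun beta0 gamma0 y0 \<xi> (x1,x2,x3) a beta0 gamma0 = K*(c1*(exp t1-1) + c2*(exp t2-1) + c3*(exp t3 - 1))"
    using rep_all[where ?y0.0=y0 and ?\<xi>=\<xi> and ?x1.0=x1 and ?x2.0=x2 and ?x3.0=x3 and ?a=a and ?beta0.0=beta0 and ?gamma0.0=gamma0] by blast
  have "t1 = 0 \<and> t2 = 0 \<and> t3 = 0" using H(1) by (cases y0; cases \<xi>) (auto simp: tv_def)
  then show ?thesis using H(2) by simp
qed




lemma region_neg:
  fixes x1 x2 x3 \<delta> :: "real^'k::finite"
  assumes "(x1,x2,x3) \<in> Xs (\<lambda>k. \<delta>$k > 0)"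
  shows "(x1-x3)\<bullet>\<delta> \<le> 0 \<and> (x3-x2)\<bullet>\<delta> \<le> 0 \<and> (\<delta> \<noteq> 0 \<longrightarrow> (x1-x3)\<bullet>\<delta> + (x3-x2)\<bullet>\<delta> < 0)"
proof -
  have k: "(x1,x2,x3) \<in> (if \<delta>$k > 0 then Xplus k else Xminus k)" for k
    using assms unfolding Xs_def by blast
  have t1: "(x1-x3)$k * \<delta>$k \<le> 0" for k
    using k[of k] by (cases "\<delta>$k > 0") (auto simp: Xplus_def Xminus_def mult_nonpos_nonneg mult_nonneg_nonpos2 intro: mult_nonpos_nonneg mult_nonneg_nonpos)
  have t2: "(x3-x2)$k * \<delta>$k \<le> 0" for k
    using k[of k] by (cases "\<delta>$k > 0") (auto simp: Xplus_def Xminus_def intro: mult_nonpos_nonneg mult_nonneg_nonpos)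
  have t3: "(x1-x2)$k * \<delta>$k < 0" if "\<delta>$k \<noteq> 0" for k
    using k[of k] that by (cases "\<delta>$k > 0") (auto simp: Xplus_def Xminus_def mult_neg_pos mult_pos_neg)
  have t4: "(x1-x2)$k * \<delta>$k \<le> 0" for k
  proof -
    have "(x1-x2)$k * \<delta>$k = (x1-x3)$k * \<delta>$k + (x3-x2)$k * \<delta>$k" by (simp add: algebra_simps)
    then show ?thesis using t1[of k] t2[of k] by linarith
  qed
  have A: "(x1-x3)\<bullet>\<delta> \<le> 0" unfolding inner_vec_def using t1 by (simp add: sum_nonpos)
  have B: "(x3-x2)\<bullet>\<delta> \<le> 0" unfolding inner_vec_def using t2 by (simp add: sum_nonpos)
  have C: "(x1-x3)\<bullet>\<delta> + (x3-x2)\<bullet>\<delta> < 0" if "\<delta> \<noteq> 0"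
  proof -
    obtain k where "\<delta>$k \<noteq> 0" using \<open>\<delta> \<noteq> 0\<close> by (metis vec_eq_iff zero_index)
    have "(x1-x3)\<bullet>\<delta> + (x3-x2)\<bullet>\<delta> = (x1-x2)\<bullet>\<delta>" by (simp add: inner_diff_left)
    also have "\<dots> = (\<Sum>i\<in>UNIV. (x1-x2)$i * \<delta>$i)" unfolding inner_vec_def by simp
    also have "\<dots> < (\<Sum>i\<in>(UNIV::'k set). 0)"
      apply (rule sum_strict_mono_ex1[of UNIV "\<lambda>i. (x1-x2)$i * \<delta>$i" "\<lambda>i. 0"])
      using t4 t3[OF \<open>\<delta>$k \<noteq> 0\<close>] by auto
    finally show ?thesis by simp
  qed
  show ?thesis using A B C by blast
qed

lemma region_pos:
  fixes x1 x2 x3 \<delta> :: "real^'k::finite"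
  assumes "(x1,x2,x3) \<in> Xs (\<lambda>k. \<delta>$k < 0)"
  shows "(x1-x3)\<bullet>\<delta> \<ge> 0 \<and> (x3-x2)\<bullet>\<delta> \<ge> 0 \<and> (\<delta> \<noteq> 0 \<longrightarrow> (x1-x3)\<bullet>\<delta> + (x3-x2)\<bullet>\<delta> > 0)"
proof -
  have "(x1,x2,x3) \<in> Xs (\<lambda>k. (-\<delta>)$k > 0)" using assms by simp
  from region_neg[OF this] show ?thesis by (auto simp: inner_minus_right)
qed




lemma integral_pos_ind:
  fixes f :: "'a \<Rightarrow> real"
  assumes int: "integrable M (\<lambda>w. indicator C w * f w)" and m: "measure M C > 0"
    and pos: "\<forall>w\<in>C. f w > 0"
  shows "(\<integral>w. indicator C w * f w \<partial>M) > 0"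
proof -
  have Cs: "C \<in> sets M" using m measure_notin_sets by force
  have nn: "indicator C w * f w \<ge> 0" for w using pos by (auto simp: indicator_def less_imp_le)
  have ge: "(\<integral>w. indicator C w * f w \<partial>M) \<ge> 0" using nn by (simp add: integral_nonneg)
  moreover have "(\<integral>w. indicator C w * f w \<partial>M) \<noteq> 0"
  proof
    assume "(\<integral>w. indicator C w * f w \<partial>M) = 0"
    then have "AE w in M. indicator C w * f w = 0"
      using integral_nonneg_eq_0_iff_AE[OF int] nn by auto
    then have "AE w in M. \<not> (w \<in> C)"
      by eventually_elim (use pos in \<open>auto simp: indicator_def\<close>)
    then have "emeasure M {w\<in>space M. w \<in> C} = 0" by (rule emeasure_eq_0_AE)
    moreover have "{w\<in>space M. w \<in> C} = C" using sets.sets_into_space[OF Cs] by auto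
    ultimately have "measure M C = 0" by (simp add: measure_def)
    then show False using m by simp
  qed
  ultimately show ?thesis by linarith
qed

lemma integral_neg_ind:
  fixes f :: "'a \<Rightarrow> real"
  assumes int: "integrable M (\<lambda>w. indicator C w * f w)" and m: "measure M C > 0"
    and neg: "\<forall>w\<in>C. f w < 0"
  shows "(\<integral>w. indicator C w * f w \<partial>M) < 0"
proof -
  have int': "integrable M (\<lambda>w. indicator C w * (- f w))" using integrable_minus[OF int] by simp
  have "(\<integral>w. indicator C w * (- f w) \<partial>M) > 0"
    by (rule integral_pos_ind[OF int' m]) (use neg in auto)
  moreover have "(\<integral>w. indicator C w * (- f w) \<partial>M) = - (\<integral>w. indicator C w * f w \<partial>M)"
    using integral_minus[of M "\<lambda>w. indicator C w * f w"] by simp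
  ultimately show ?thesis by linarith
qed

lemma choose:
  fixes \<beta> beta0 :: "real^'k::finite" and \<gamma> gamma0 :: real
  assumes "\<not> (\<beta> = beta0 \<and> \<gamma> = gamma0)"
  shows "\<exists>s. (\<forall>x1 x2 x3 a. (x1,x2,x3) \<in> Xs s \<longrightarrow> Sfun beta0 gamma0 y0 \<xi> (x1,x2,x3) a \<beta> \<gamma> < 0)
           \<or> (\<forall>x1 x2 x3 a. (x1,x2,x3) \<in> Xs s \<longrightarrow> Sfun beta0 gamma0 y0 \<xi> (x1,x2,x3) a \<beta> \<gamma> > 0)"
proof -
  define \<delta> where "\<delta> = \<beta> - beta0"
  define d where "d = \<gamma> - gamma0"
  have nz: "\<delta> \<noteq> 0 \<or> d \<noteq> 0" using assms by (auto simp: \<delta>_def d_def)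
  have Rn: "(x1-x3)\<bullet>\<delta> \<le> 0 \<and> (x3-x2)\<bullet>\<delta> \<le> 0 \<and> (\<delta> \<noteq> 0 \<longrightarrow> (x1-x3)\<bullet>\<delta> + (x3-x2)\<bullet>\<delta> < 0)
      \<and> (\<delta> = 0 \<longrightarrow> (x1-x3)\<bullet>\<delta> = 0 \<and> (x3-x2)\<bullet>\<delta> = 0)"
    if "(x1,x2,x3) \<in> Xs (\<lambda>k. \<delta>$k > 0)" for x1 x2 x3
    using region_neg[OF that] by auto
  have Rp: "(x1-x3)\<bullet>\<delta> \<ge> 0 \<and> (x3-x2)\<bullet>\<delta> \<ge> 0 \<and> (\<delta> \<noteq> 0 \<longrightarrow> (x1-x3)\<bullet>\<delta> + (x3-x2)\<bullet>\<delta> > 0)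
      \<and> (\<delta> = 0 \<longrightarrow> (x1-x3)\<bullet>\<delta> = 0 \<and> (x3-x2)\<bullet>\<delta> = 0)"
    if "(x1,x2,x3) \<in> Xs (\<lambda>k. \<delta>$k < 0)" for x1 x2 x3
    using region_pos[OF that] by auto
  have NN: "\<forall>x1 x2 x3 a. (x1,x2,x3) \<in> Xs (\<lambda>k. \<delta>$k > 0) \<longrightarrow> Sfun beta0 gamma0 y0 \<xi> (x1,x2,x3) a \<beta> \<gamma> < 0"
    if "(\<not> y0 \<and> \<xi> = XiA \<and> d \<ge> 0) \<or> (y0 \<and> \<xi> = XiA \<and> d \<le> 0)" 
  proof (intro allI impI)
    fix x1 x2 x3 a assume R: "(x1,x2,x3) \<in> Xs (\<lambda>k. \<delta>$k > 0)"
    have "allneg (tv y0 \<xi> ((x1-x3)\<bullet>\<delta>) ((x3-x2)\<bullet>\<delta>) d)"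
      using Rn[OF R] nz that by (cases y0; cases "\<delta> = 0") (auto simp: allneg_def tv_def)
    then show "Sfun beta0 gamma0 y0 \<xi> (x1,x2,x3) a \<beta> \<gamma> < 0"
      by (intro Sfun_neg) (simp add: \<delta>_def d_def)
  qed
  have NP: "\<forall>x1 x2 x3 a. (x1,x2,x3) \<in> Xs (\<lambda>k. \<delta>$k < 0) \<longrightarrow> Sfun beta0 gamma0 y0 \<xi> (x1,x2,x3) a \<beta> \<gamma> < 0"
    if "(\<not> y0 \<and> \<xi> = XiB \<and> d \<le> 0) \<or> (y0 \<and> \<xi> = XiB \<and> d \<ge> 0)" 
  proof (intro allI impI)
    fix x1 x2 x3 a assume R: "(x1,x2,x3) \<in> Xs (\<lambda>k. \<delta>$k < 0)"
    have "allneg (tv y0 \<xi> ((x1-x3)\<bullet>\<delta>) ((x3-x2)\<bullet>\<delta>) d)"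
      using Rp[OF R] nz that by (cases y0; cases "\<delta> = 0") (auto simp: allneg_def tv_def)
    then show "Sfun beta0 gamma0 y0 \<xi> (x1,x2,x3) a \<beta> \<gamma> < 0"
      by (intro Sfun_neg) (simp add: \<delta>_def d_def)
  qed
  have PP: "\<forall>x1 x2 x3 a. (x1,x2,x3) \<in> Xs (\<lambda>k. \<delta>$k < 0) \<longrightarrow> Sfun beta0 gamma0 y0 \<xi> (x1,x2,x3) a \<beta> \<gamma> > 0"
    if "(\<not> y0 \<and> \<xi> = XiA \<and> d < 0) \<or> (y0 \<and> \<xi> = XiA \<and> d > 0)" 
  proof (intro allI impI)
    fix x1 x2 x3 a assume R: "(x1,x2,x3) \<in> Xs (\<lambda>k. \<delta>$k < 0)"
    have "allpos (tv y0 \<xi> ((x1-x3)\<bullet>\<delta>) ((x3-x2)\<bullet>\<delta>) d)"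
      using Rp[OF R] nz that by (cases y0; cases "\<delta> = 0") (auto simp: allpos_def tv_def)
    then show "Sfun beta0 gamma0 y0 \<xi> (x1,x2,x3) a \<beta> \<gamma> > 0"
      by (intro Sfun_pos) (simp add: \<delta>_def d_def)
  qed
  have PN: "\<forall>x1 x2 x3 a. (x1,x2,x3) \<in> Xs (\<lambda>k. \<delta>$k > 0) \<longrightarrow> Sfun beta0 gamma0 y0 \<xi> (x1,x2,x3) a \<beta> \<gamma> > 0"
    if "(\<not> y0 \<and> \<xi> = XiB \<and> d > 0) \<or> (y0 \<and> \<xi> = XiB \<and> d < 0)" 
  proof (intro allI impI)
    fix x1 x2 x3 a assume R: "(x1,x2,x3) \<in> Xs (\<lambda>k. \<delta>$k > 0)"
    have "allpos (tv y0 \<xi> ((x1-x3)\<bullet>\<delta>) ((x3-x2)\<bullet>\<delta>) d)"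
      using Rn[OF R] nz that by (cases y0; cases "\<delta> = 0") (auto simp: allpos_def tv_def)
    then show "Sfun beta0 gamma0 y0 \<xi> (x1,x2,x3) a \<beta> \<gamma> > 0"
      by (intro Sfun_pos) (simp add: \<delta>_def d_def)
  qed
  show ?thesis
  proof (cases \<xi>)
    case XiA
    show ?thesis
    proof (cases y0)
      case True
      then show ?thesis using NN PP XiA by (cases "d \<le> 0") (blast, force)
    next
      case False
      then show ?thesis using NN PP XiA by (cases "d \<ge> 0") (blast, force)
    qed
  next
    case XiB
    show ?thesis
    proof (cases y0)
      case True
      then show ?thesis using NP PN XiB by (cases "d \<ge> 0") (blast, force)
    next
      case False
      then show ?thesis using NP PN XiB by (cases "d \<le> 0") (blast, force)
    qed
  qed
qed


theorem theorem1:
  fixes \<mu> :: "(bool \<times> ((real^'k) \<times> (real^'k) \<times> (real^'k)) \<times> real) measure"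
    and beta0 :: "real^'k" and gamma0 :: real
    and y0 :: bool and \<xi> :: xi
  assumes "prob_space \<mu>"
    and "\<forall>s. measure \<mu> (cond_event y0 s) > 0"
    and "\<forall>s \<beta> \<gamma>. mbar_welldef \<mu> beta0 gamma0 y0 \<xi> s \<beta> \<gamma>"
  shows "\<forall>\<beta> \<gamma>. (\<forall>s. mbar \<mu> beta0 gamma0 y0 \<xi> s \<beta> \<gamma> = 0) \<longleftrightarrow> (\<beta> = beta0 \<and> \<gamma> = gamma0)"
proof -
  have memC: "w \<in> cond_event y0 s \<longleftrightarrow> fst w = y0 \<and> fst (snd w) \<in> Xs s" for w s
    by (cases w) (auto simp: cond_event_def)
  have triple: "\<exists>y x1 x2 x3 a. w = (y, (x1, x2, x3), a)" for w :: "bool \<times> ((real^'k) \<times> (real^'k) \<times> (real^'k)) \<times> real"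
    by (metis prod.exhaust)
  have Ceq: "fst w = y0 \<Longrightarrow> (\<Sum>y\<in>UNIV. pY beta0 gamma0 (fst w) (fst (snd w)) (snd (snd w)) y
        * mom y0 \<xi> y (fst (snd w)) \<beta> \<gamma>) = Sfun beta0 gamma0 y0 \<xi> (fst (snd w)) (snd (snd w)) \<beta> \<gamma>"
    for w \<beta> \<gamma> by (simp add: Sfun_def)
  have int: "integrable \<mu> (\<lambda>w. indicator (cond_event y0 s) w * (\<Sum>y\<in>UNIV. pY beta0 gamma0 (fst w) (fst (snd w)) (snd (snd w)) y
        * mom y0 \<xi> y (fst (snd w)) \<beta> \<gamma>))" for s \<beta> \<gamma>
  proof -
    have "(\<lambda>w. indicator (cond_event y0 s) w * (\<Sum>y\<in>UNIV. pY beta0 gamma0 (fst w) (fst (snd w)) (snd (snd w)) y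
        * mom y0 \<xi> y (fst (snd w)) \<beta> \<gamma>)) = (\<lambda>w. \<Sum>y\<in>UNIV. indicator (cond_event y0 s) w * (pY beta0 gamma0 (fst w) (fst (snd w)) (snd (snd w)) y
        * mom y0 \<xi> y (fst (snd w)) \<beta> \<gamma>))"
      by (simp add: sum_distrib_left)
    moreover have "integrable \<mu> (\<lambda>w. \<Sum>y\<in>UNIV. indicator (cond_event y0 s) w * (pY beta0 gamma0 (fst w) (fst (snd w)) (snd (snd w)) y
        * mom y0 \<xi> y (fst (snd w)) \<beta> \<gamma>))"
      apply (rule Bochner_Integration.integrable_sum)
      using assms(3) unfolding mbar_welldef_def by blast
    ultimately show ?thesis by simp
  qed
  show ?thesis
  proof (intro allI, rule iffI)
    fix \<beta> \<gamma> assume H: "\<forall>s. mbar \<mu> beta0 gamma0 y0 \<xi> s \<beta> \<gamma> = 0"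
    show "\<beta> = beta0 \<and> \<gamma> = gamma0"
    proof (rule ccontr)
      assume ne: "\<not> (\<beta> = beta0 \<and> \<gamma> = gamma0)"
      from choose[OF ne, of y0 \<xi>] obtain s where S:
        "(\<forall>x1 x2 x3 a. (x1,x2,x3) \<in> Xs s \<longrightarrow> Sfun beta0 gamma0 y0 \<xi> (x1,x2,x3) a \<beta> \<gamma> < 0)
           \<or> (\<forall>x1 x2 x3 a. (x1,x2,x3) \<in> Xs s \<longrightarrow> Sfun beta0 gamma0 y0 \<xi> (x1,x2,x3) a \<beta> \<gamma> > 0)"
        by blast
      define f where "f = (\<lambda>w. \<Sum>y\<in>UNIV. pY beta0 gamma0 (fst w) (fst (snd w)) (snd (snd w)) y
        * mom y0 \<xi> y (fst (snd w)) \<beta> \<gamma>)"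
      have mpos: "measure \<mu> (cond_event y0 s) > 0" using assms(2) by blast
      have intf: "integrable \<mu> (\<lambda>w. indicator (cond_event y0 s) w * f w)" using int unfolding f_def .
      have fS: "f w = Sfun beta0 gamma0 y0 \<xi> (fst (snd w)) (snd (snd w)) \<beta> \<gamma>" if "w \<in> cond_event y0 s" for w
        using Ceq that memC unfolding f_def by blast
      have "(\<integral>w. indicator (cond_event y0 s) w * f w \<partial>\<mu>) \<noteq> 0"
      proof (cases "\<forall>x1 x2 x3 a. (x1,x2,x3) \<in> Xs s \<longrightarrow> Sfun beta0 gamma0 y0 \<xi> (x1,x2,x3) a \<beta> \<gamma> < 0")
        case True
        have "\<forall>w\<in>cond_event y0 s. f w < 0"
        proof
          fix w assume w: "w \<in> cond_event y0 s"
          obtain y x1 x2 x3 a where weq: "w = (y, (x1, x2, x3), a)" using triple by blast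
          have X: "(x1,x2,x3) \<in> Xs s" using memC[of w s] w weq by simp
          show "f w < 0" using fS[OF w] True X weq by simp
        qed
        from integral_neg_ind[OF intf mpos this] show ?thesis by simp
      next
        case False
        then have P: "\<forall>x1 x2 x3 a. (x1,x2,x3) \<in> Xs s \<longrightarrow> Sfun beta0 gamma0 y0 \<xi> (x1,x2,x3) a \<beta> \<gamma> > 0"
          using S by blast
        have "\<forall>w\<in>cond_event y0 s. f w > 0"
        proof
          fix w assume w: "w \<in> cond_event y0 s"
          obtain y x1 x2 x3 a where weq: "w = (y, (x1, x2, x3), a)" using triple by blast
          have X: "(x1,x2,x3) \<in> Xs s" using memC[of w s] w weq by simp
          show "f w > 0" using fS[OF w] P X weq by simp
        qed
        from integral_pos_ind[OF intf mpos this] show ?thesis by simp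
      qed
      then have "mbar \<mu> beta0 gamma0 y0 \<xi> s \<beta> \<gamma> \<noteq> 0"
        using mpos unfolding mbar_def f_def by simp
      then show False using H by blast
    qed
  next
    fix \<beta> \<gamma> assume E: "\<beta> = beta0 \<and> \<gamma> = gamma0"
    show "\<forall>s. mbar \<mu> beta0 gamma0 y0 \<xi> s \<beta> \<gamma> = 0"
    proof
      fix s
      have "(\<lambda>w. indicator (cond_event y0 s) w * (\<Sum>y\<in>UNIV. pY beta0 gamma0 (fst w) (fst (snd w)) (snd (snd w)) y
        * mom y0 \<xi> y (fst (snd w)) \<beta> \<gamma>)) = (\<lambda>w. 0)"
      proof (rule ext)
        fix w
        show "indicator (cond_event y0 s) w * (\<Sum>y\<in>UNIV. pY beta0 gamma0 (fst w) (fst (snd w)) (snd (snd w)) y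
          * mom y0 \<xi> y (fst (snd w)) \<beta> \<gamma>) = 0"
        proof (cases "w \<in> cond_event y0 s")
          case True
          obtain y x1 x2 x3 a where w: "w = (y, (x1, x2, x3), a)" using triple by blast
          have "fst w = y0" using True memC by blast
          then show ?thesis using Ceq[of w \<beta> \<gamma>] E w by (simp add: Sfun_zero)
        next
          case False
          then show ?thesis by simp
        qed
      qed
      then show "mbar \<mu> beta0 gamma0 y0 \<xi> s \<beta> \<gamma> = 0" unfolding mbar_def by simp
    qed
  qed
qed

end
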